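(* Suppose $A,B\in M_N(\mathbb C)$ are simultaneously diagonalizable, with a common basis of eigenvectors $v_1,\dots,v_N$, $Av_i=\lambda_iv_i$, $Bv_i=\gamma_iv_i$, all $\lambda_i$ real and positive, and put $\mu_i=\gamma_i/\lambda_i$. If $|\mu_i|<1$ for every $i=1,\dots,N$, then for every $\theta\in(1/2,1]$ the $\theta$-method with $u=0$ is unconditionally stable, i.e. stable for every step size $h=\tau/m$, $m\in\mathbb N$.
   Context: Let $\tau>0$ and consider $y'(t)=-Ay(t)+By(t-\tau)$. For $u=0$, $\theta\in[0,1]$, $m\in\mathbb N$ and $h=\tau/m$, the $\theta$-method is the recursion, for $n\ge0$ and arbitrary starting values $y_{-m},\dots,y_0\in\mathbb C^N$, $$y_{n+1}=y_n+h(1-\theta)\big[-Ay_n+By_{n-m}\big]+h\theta\big[-Ay_{n+1}+By_{n-m+1}\big].$$ It is called stable (for that $h$) if $y_n\to0$ as $n\to\infty$ for every choice of starting values. *)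

theory Defs
  imports "HOL-Analysis.Analysis"
begin

text \<open>One step of the theta-method (u = 0) for y'(t) = -A y(t) + B y(t - tau), with
  step size h = tau/m.  Sequences are indexed by integers; y (-m), ..., y 0 are the
  starting values and the recursion is required for all n >= 0.\<close>

definition theta_recursion ::
  "complex^'n^'n \<Rightarrow> complex^'n^'n \<Rightarrow> real \<Rightarrow> real \<Rightarrow> nat \<Rightarrow> (int \<Rightarrow> complex^'n) \<Rightarrow> bool"
where
  "theta_recursion A B \<theta> \<tau> m y \<longleftrightarrow>
     (\<forall>n::int. n \<ge> 0 \<longrightarrow>
        y (n + 1) = y n
          + complex_of_real ((\<tau> / real m) * (1 - \<theta>)) *s (- (A *v y n) + B *v y (n - int m))
          + complex_of_real ((\<tau> / real m) * \<theta>) *s (- (A *v y (n + 1)) + B *v y (n - int m + 1)))"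

definition theta_stable ::
  "complex^'n^'n \<Rightarrow> complex^'n^'n \<Rightarrow> real \<Rightarrow> real \<Rightarrow> nat \<Rightarrow> bool"
where
  "theta_stable A B \<theta> \<tau> m \<longleftrightarrow>
     (\<forall>y. theta_recursion A B \<theta> \<tau> m y \<longrightarrow> (\<lambda>n::nat. y (int n)) \<longlonglongrightarrow> 0)"

end

theory Submission
  imports Defs
begin
lemma energy: fixes a b :: complex and t :: real
  shows "Re((b - a) * cnj (of_real t*b + of_real (1-t)*a)) = ((cmod b)^2 - (cmod a)^2)/2 + (t - 1/2)*(cmod (b-a))^2"
  unfolding cmod_power2 by (simp add: power2_eq_square field_simps)
lemma reb: fixes g w w' :: complex shows "Re (g * w' * cnj w) \<le> cmod g / 2 * ((cmod w')^2 + (cmod w)^2)"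
proof -
  have "Re (g * w' * cnj w) \<le> cmod (g * w' * cnj w)" by (rule complex_Re_le_cmod)
  also have "\<dots> = cmod g * (cmod w' * cmod w)" by (simp add: norm_mult)
  also have "\<dots> \<le> cmod g * (((cmod w')^2 + (cmod w)^2)/2)"
  proof (intro mult_left_mono)
    have "0 \<le> (cmod w' - cmod w)^2" by simp
    then show "cmod w' * cmod w \<le> ((cmod w')^2 + (cmod w)^2)/2" by (simp add: power2_eq_square algebra_simps)
  qed simp
  finally show ?thesis by simp
qed
lemma comb: fixes R D E h lam W Q g W' :: real
  shows "R = D/2 + E \<Longrightarrow> R = -h*lam*W + Q \<Longrightarrow> Q \<le> h*(g/2*(W'+W)) \<Longrightarrow> 0 \<le> E \<Longrightarrow> D \<le> -h*(2*lam-g)*W + h*g*W'"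
  by (simp add: algebra_simps)

lemma comb2: fixes V1 V0 C1 C0 h lam S W W' g :: real
  shows "V1 = C1 + h*lam*(S + W - W') \<Longrightarrow> V0 = C0 + h*lam*S \<Longrightarrow> C1 - C0 \<le> - h*(2*lam - g)*W + h*g*W' \<Longrightarrow> 0 \<le> h*(lam-g)*W' \<Longrightarrow> V1 \<le> V0 - h*(lam-g)*W"
  by (simp add: algebra_simps)

lemma scalar_stable:
  fixes c :: "int \<Rightarrow> complex" and h lam t :: real and g :: complex and m :: nat
  assumes h: "h > 0" and lam: "lam > 0" and gl: "cmod g < lam" and t1: "1/2 \<le> t" and t2: "t \<le> 1"
  and rec: "\<And>n. n \<ge> 0 \<Longrightarrow> c (n+1) = c n + of_real (h*(1-t)) * (- (of_real lam * c n) + g * c (n - int m))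
      + of_real (h*t) * (-(of_real lam * c(n+1)) + g * c (n - int m + 1))"
  shows "(\<lambda>n::nat. c (int n)) \<longlonglongrightarrow> 0"
proof -
  define w where "w n = of_real t * c(n+1) + of_real (1-t) * c n" for n
  define d where "d n = c(n+1) - c n" for n
  have dw: "d n = of_real h * (- of_real lam * w n + g * w (n - int m))" if "n \<ge> 0" for n
    using rec[OF that] by (simp add: d_def w_def algebra_simps)
  have step: "(cmod (c(n+1)))^2 - (cmod (c n))^2 \<le> - h*(2*lam - cmod g) * (cmod (w n))^2 + h * cmod g * (cmod (w (n - int m)))^2"
    if n: "n \<ge> 0" for n
  proof -
    have e: "Re (d n * cnj (w n)) = ((cmod (c(n+1)))^2 - (cmod(c n))^2)/2 + (t-1/2)*(cmod (d n))^2"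
      using energy[of "c(n+1)" "c n" t] by (simp add: d_def w_def)
    have "d n * cnj (w n) = of_real h * (- of_real lam * (w n * cnj (w n)) + g * w (n - int m) * cnj (w n))"
      unfolding dw[OF n] by (simp add: algebra_simps)
    also have "w n * cnj (w n) = of_real ((cmod (w n))^2)" by (rule complex_norm_square[symmetric])
    finally have r0: "d n * cnj (w n) = of_real h * (- of_real lam * of_real ((cmod (w n))^2) + g * w (n - int m) * cnj (w n))" .
    have a1: "Re (of_real h * z) = h * Re z" for z by simp
    have a2: "Re (- of_real lam * of_real q + z) = - lam * q + Re z" for q z by simp
    have r: "Re (d n * cnj (w n)) = - h*lam*(cmod (w n))^2 + h * Re (g * w(n - int m) * cnj (w n))"
      unfolding r0 a1 a2 by (simp add: algebra_simps)
    have q: "h * Re (g * w(n - int m) * cnj (w n)) \<le> h * (cmod g / 2 * ((cmod (w(n - int m)))^2 + (cmod (w n))^2))"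
      using reb h by (intro mult_left_mono) auto
    have "0 \<le> (t-1/2)*(cmod (d n))^2" using t1 by simp
    then show ?thesis using comb[OF e r q] by simp
  qed
  define V where "V n = (cmod (c n))^2 + h*lam * (\<Sum>j<m. (cmod (w (n - int m + int j)))^2)" for n
  have Vstep: "V (n+1) \<le> V n - h*(lam - cmod g)*(cmod (w n))^2" if n: "n \<ge> 0" for n
  proof -
    define F where "F j = (cmod (w (n - int m + int j)))^2" for j
    have s1: "(\<Sum>j<Suc m. F j) = F 0 + (\<Sum>j<m. F (Suc j))" by (rule sum.lessThan_Suc_shift)
    have s2: "(\<Sum>j<Suc m. F j) = (\<Sum>j<m. F j) + F m" by simp
    have "(\<Sum>j<m. F (Suc j)) = (\<Sum>j<m. (cmod (w (n + 1 - int m + int j)))^2)"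
      by (simp add: F_def algebra_simps)
    moreover have "F 0 = (cmod (w (n - int m)))^2" "F m = (cmod (w n))^2" by (simp_all add: F_def)
    ultimately have S: "(\<Sum>j<m. (cmod (w (n + 1 - int m + int j)))^2) = (\<Sum>j<m. F j) + (cmod (w n))^2 - (cmod (w (n - int m)))^2"
      using s1 s2 by simp
    have V1: "V (n+1) = (cmod (c (n+1)))^2 + h*lam*((\<Sum>j<m. F j) + (cmod (w n))^2 - (cmod (w (n - int m)))^2)"
      unfolding V_def S by (rule refl)
    have V0: "V n = (cmod (c n))^2 + h*lam*(\<Sum>j<m. F j)" unfolding V_def F_def by simp
    have "0 \<le> h * (lam - cmod g) * (cmod (w (n - int m)))^2" using h gl by simp
    then show ?thesis using comb2[OF V1 V0 step[OF n]] by blast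
  qed
  have Vnn: "V n \<ge> 0" for n unfolding V_def using h lam by (intro add_nonneg_nonneg mult_nonneg_nonneg sum_nonneg) auto
  have Vb: "V (int k) + h*(lam - cmod g) * (\<Sum>j<k. (cmod (w (int j)))^2) \<le> V 0" for k
  proof (induction k)
    case (Suc k)
    have "V (int k + 1) \<le> V (int k) - h*(lam - cmod g)*(cmod (w (int k)))^2" by (rule Vstep) simp
    moreover have es: "(\<Sum>j<Suc k. (cmod (w (int j)))^2) = (\<Sum>j<k. (cmod (w (int j)))^2) + (cmod (w (int k)))^2" by simp
    moreover have ev: "V (int (Suc k)) = V (int k + 1)" by (simp add: add.commute)
    moreover have ed: "h*(lam - cmod g)*((\<Sum>j<k. (cmod (w (int j)))^2) + (cmod (w (int k)))^2) = h*(lam - cmod g)*(\<Sum>j<k. (cmod (w (int j)))^2) + h*(lam - cmod g)*(cmod (w (int k)))^2"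
      by (simp only: distrib_left)
    ultimately show ?case unfolding es ev ed using Suc by linarith
  qed simp
  define K where "K = h*(lam - cmod g)"
  have K: "K > 0" using h gl by (simp add: K_def)
  have "summable (\<lambda>j. (cmod (w (int j)))^2)"
  proof (rule summableI_nonneg_bounded)
    fix k
    have "K * (\<Sum>j<k. (cmod (w (int j)))^2) \<le> V 0" using Vb[of k] Vnn[of "int k"] by (simp add: K_def)
    then show "(\<Sum>j<k. (cmod (w (int j)))^2) \<le> V 0 / K" using K by (simp add: field_simps)
  qed simp
  then have "(\<lambda>j. (cmod (w (int j)))^2) \<longlonglongrightarrow> 0" by (rule summable_LIMSEQ_zero)
  then have "(\<lambda>j. sqrt ((cmod (w (int j)))^2)) \<longlonglongrightarrow> sqrt 0" by (rule tendsto_real_sqrt)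
  moreover have "(\<lambda>j. sqrt ((cmod (w (int j)))^2)) = (\<lambda>j. norm (w (int j)))" by simp
  ultimately have "(\<lambda>j. norm (w (int j))) \<longlonglongrightarrow> 0" by simp
  then have W: "(\<lambda>j. w (int j)) \<longlonglongrightarrow> 0" by (rule tendsto_norm_zero_cancel)
  have "(\<lambda>j. w (int (j + m) - int m)) = (\<lambda>j. w (int j))" by simp
  then have "(\<lambda>j. w (int (j + m) - int m)) \<longlonglongrightarrow> 0" using W by simp
  then have W': "(\<lambda>j. w (int j - int m)) \<longlonglongrightarrow> 0" by (rule LIMSEQ_offset)
  have "(\<lambda>j. of_real h * (- of_real lam * w (int j) + g * w (int j - int m))) \<longlonglongrightarrow> of_real h * (- of_real lam * 0 + g * 0)"
    by (intro tendsto_intros W W')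
  moreover have "(\<lambda>j. of_real h * (- of_real lam * w (int j) + g * w (int j - int m))) = (\<lambda>j. d (int j))"
    using dw by simp
  ultimately have D: "(\<lambda>j. d (int j)) \<longlonglongrightarrow> 0" by simp
  have "(\<lambda>j. w (int j) - of_real t * d (int j)) \<longlonglongrightarrow> 0 - of_real t * 0"
    by (intro tendsto_intros W D)
  moreover have "w n - of_real t * d n = c n" for n by (simp add: w_def d_def algebra_simps)
  ultimately show ?thesis by (simp only: diff_zero mult_zero_right)
qed
lemma mvneg: fixes Q :: "complex^'n^'n" shows "Q *v (- x) = - (Q *v x)"
  by (simp add: vec_eq_iff matrix_vector_mult_def sum_negf)

theorem mainTheorem13:
  fixes A B :: "complex^'n^'n"
    and v :: "'n \<Rightarrow> complex^'n"
    and lam :: "'n \<Rightarrow> real"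
    and \<gamma> :: "'n \<Rightarrow> complex"
    and \<tau> :: real
  assumes tau_pos: "\<tau> > 0"
    and basis: "invertible (\<chi> i j. v j $ i)"
    and eigA: "\<And>i. A *v v i = complex_of_real (lam i) *s v i"
    and eigB: "\<And>i. B *v v i = \<gamma> i *s v i"
    and lam_pos: "\<And>i. lam i > 0"
    and mu_lt: "\<And>i. norm (\<gamma> i / complex_of_real (lam i)) < 1"
  shows "\<forall>\<theta>. 1/2 < \<theta> \<and> \<theta> \<le> 1 \<longrightarrow> (\<forall>m::nat. m \<ge> 1 \<longrightarrow> theta_stable A B \<theta> \<tau> m)"
proof (intro allI impI)
  fix \<theta> :: real and m :: nat
  assume th: "1/2 < \<theta> \<and> \<theta> \<le> 1" and m: "m \<ge> 1"
  define P :: "complex^'n^'n" where "P = (\<chi> i j. v j $ i)"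
  obtain Q where PQ: "P ** Q = mat 1" "Q ** P = mat 1" using basis unfolding invertible_def P_def by blast
  define Dl :: "complex^'n^'n" where "Dl = (\<chi> i j. if i = j then complex_of_real (lam i) else 0)"
  define Dg :: "complex^'n^'n" where "Dg = (\<chi> i j. if i = j then \<gamma> i else 0)"
  have AP: "A ** P = P ** Dl"
  proof -
    have "(A ** P)$i$j = (P ** Dl)$i$j" for i j
    proof -
      have "(A ** P)$i$j = (A *v v j)$i" by (simp add: matrix_matrix_mult_def matrix_vector_mult_def P_def)
      also have "\<dots> = complex_of_real (lam j) * v j $ i" by (simp add: eigA)
      also have "\<dots> = (P ** Dl)$i$j" by (simp add: matrix_matrix_mult_def P_def Dl_def if_distrib cong: if_cong)
      finally show ?thesis .
    qed
    then show ?thesis by (simp add: vec_eq_iff)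
  qed
  have BP: "B ** P = P ** Dg"
  proof -
    have "(B ** P)$i$j = (P ** Dg)$i$j" for i j
    proof -
      have "(B ** P)$i$j = (B *v v j)$i" by (simp add: matrix_matrix_mult_def matrix_vector_mult_def P_def)
      also have "\<dots> = \<gamma> j * v j $ i" by (simp add: eigB)
      also have "\<dots> = (P ** Dg)$i$j" by (simp add: matrix_matrix_mult_def P_def Dg_def if_distrib cong: if_cong)
      finally show ?thesis .
    qed
    then show ?thesis by (simp add: vec_eq_iff)
  qed
  have PQx: "P *v (Q *v x) = x" for x by (simp add: matrix_vector_mul_assoc PQ)
  have keyA: "Q *v (A *v x) = Dl *v (Q *v x)" for x
  proof -
    have "Q *v (A *v x) = Q *v (A *v (P *v (Q *v x)))" by (simp add: PQx)
    also have "\<dots> = (Q ** P ** Dl) *v (Q *v x)" by (simp add: matrix_vector_mul_assoc AP matrix_mul_assoc)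
    finally show ?thesis by (simp add: PQ)
  qed
  have keyB: "Q *v (B *v x) = Dg *v (Q *v x)" for x
  proof -
    have "Q *v (B *v x) = Q *v (B *v (P *v (Q *v x)))" by (simp add: PQx)
    also have "\<dots> = (Q ** P ** Dg) *v (Q *v x)" by (simp add: matrix_vector_mul_assoc BP matrix_mul_assoc)
    finally show ?thesis by (simp add: PQ)
  qed
  have cDl: "(Dl *v z) $ i = complex_of_real (lam i) * z $ i" for z i
    proof -
    have "(\<Sum>j\<in>UNIV. (if i = j then complex_of_real (lam i) else 0) * z $ j) = (\<Sum>j\<in>UNIV. if i = j then complex_of_real (lam i) * z $ j else 0)"
      by (rule sum.cong) auto
    then show ?thesis by (simp add: matrix_vector_mult_def Dl_def)
  qed
  have cDg: "(Dg *v z) $ i = \<gamma> i * z $ i" for z i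
    proof -
    have "(\<Sum>j\<in>UNIV. (if i = j then \<gamma> i else 0) * z $ j) = (\<Sum>j\<in>UNIV. if i = j then \<gamma> i * z $ j else 0)"
      by (rule sum.cong) auto
    then show ?thesis by (simp add: matrix_vector_mult_def Dg_def)
  qed
  show "theta_stable A B \<theta> \<tau> m" unfolding theta_stable_def
  proof (intro allI impI)
    fix y assume R: "theta_recursion A B \<theta> \<tau> m y"
    have hpos: "\<tau> / real m > 0" using tau_pos m by simp
    have ci: "(\<lambda>n::nat. (Q *v y (int n)) $ i) \<longlonglongrightarrow> 0" for i
    proof (rule scalar_stable[where c = "\<lambda>n. (Q *v y n) $ i" and h = "\<tau> / real m" and lam = "lam i" and g = "\<gamma> i"])
      show "0 < \<tau> / real m" by (rule hpos)
      show "0 < lam i" by (rule lam_pos)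
      show "cmod (\<gamma> i) < lam i" using mu_lt[of i] lam_pos[of i] by (simp add: norm_divide)
      show "1/2 \<le> \<theta>" "\<theta> \<le> 1" using th by auto
      fix n :: int assume n: "0 \<le> n"
      have E: "y (n + 1) = y n
          + complex_of_real ((\<tau> / real m) * (1 - \<theta>)) *s (- (A *v y n) + B *v y (n - int m))
          + complex_of_real ((\<tau> / real m) * \<theta>) *s (- (A *v y (n + 1)) + B *v y (n - int m + 1))"
        using R n unfolding theta_recursion_def by blast
      have "Q *v y (n + 1) = Q *v (y n
          + complex_of_real ((\<tau> / real m) * (1 - \<theta>)) *s (- (A *v y n) + B *v y (n - int m))
          + complex_of_real ((\<tau> / real m) * \<theta>) *s (- (A *v y (n + 1)) + B *v y (n - int m + 1)))"
        using E by (rule arg_cong)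
      also have "\<dots> = Q *v y n
          + complex_of_real ((\<tau> / real m) * (1 - \<theta>)) *s (- (Dl *v (Q *v y n)) + Dg *v (Q *v y (n - int m)))
          + complex_of_real ((\<tau> / real m) * \<theta>) *s (- (Dl *v (Q *v y (n + 1))) + Dg *v (Q *v y (n - int m + 1)))"
        by (simp only: matrix_vector_right_distrib vector_scalar_commute mvneg keyA keyB)
      finally have QE: "Q *v y (n + 1) = Q *v y n
          + complex_of_real ((\<tau> / real m) * (1 - \<theta>)) *s (- (Dl *v (Q *v y n)) + Dg *v (Q *v y (n - int m)))
          + complex_of_real ((\<tau> / real m) * \<theta>) *s (- (Dl *v (Q *v y (n + 1))) + Dg *v (Q *v y (n - int m + 1)))" .
      have QEi: "(Q *v y (n + 1)) $ i = (Q *v y n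
          + complex_of_real ((\<tau> / real m) * (1 - \<theta>)) *s (- (Dl *v (Q *v y n)) + Dg *v (Q *v y (n - int m)))
          + complex_of_real ((\<tau> / real m) * \<theta>) *s (- (Dl *v (Q *v y (n + 1))) + Dg *v (Q *v y (n - int m + 1)))) $ i"
        using QE by (rule arg_cong)
      also have "\<dots> = (Q *v y n) $ i
          + complex_of_real (\<tau> / real m * (1 - \<theta>)) * (- (complex_of_real (lam i) * (Q *v y n) $ i) + \<gamma> i * (Q *v y (n - int m)) $ i)
          + complex_of_real (\<tau> / real m * \<theta>) * (- (complex_of_real (lam i) * (Q *v y (n + 1)) $ i) + \<gamma> i * (Q *v y (n - int m + 1)) $ i)"
        by (simp only: vector_add_component vector_smult_component vector_uminus_component cDl cDg)
      finally show "(Q *v y (n + 1)) $ i = (Q *v y n) $ i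
          + complex_of_real (\<tau> / real m * (1 - \<theta>)) * (- (complex_of_real (lam i) * (Q *v y n) $ i) + \<gamma> i * (Q *v y (n - int m)) $ i)
          + complex_of_real (\<tau> / real m * \<theta>) * (- (complex_of_real (lam i) * (Q *v y (n + 1)) $ i) + \<gamma> i * (Q *v y (n - int m + 1)) $ i)" .
    qed
    have "(\<lambda>n::nat. \<chi> i. (Q *v y (int n)) $ i) \<longlonglongrightarrow> (\<chi> i. 0)"
      by (intro tendsto_vec_lambda ci)
    then have QY: "(\<lambda>n::nat. Q *v y (int n)) \<longlonglongrightarrow> 0" by (simp add: zero_vec_def)
    have "(\<lambda>n::nat. P *v (Q *v y (int n))) \<longlonglongrightarrow> P *v 0"
      by (rule bounded_linear.tendsto[OF matrix_vector_mul_bounded_linear QY])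
    then show "(\<lambda>n::nat. y (int n)) \<longlonglongrightarrow> 0" by (simp add: PQx)
  qed
qed
end
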